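(* In $M_3(K[T_3])$ the following equalities hold, where $f_{ij}=\frac12(t_it_j+t_jt_i)-\frac13\mathrm{tr}(t_it_j)I$, $f_{iij}=[t_i^2,t_j]$, $f_{132}=[t_1t_3+t_3t_1,t_2]$, $f_{123}=[t_1t_2+t_2t_1,t_3]$: (i) $\mathrm{tr}(t_1t_2t_3)\,t_1=\frac12\big(\mathrm{tr}(t_1^2)[t_2,t_3]-\mathrm{tr}(t_1t_2)[t_1,t_3]+\mathrm{tr}(t_1t_3)[t_1,t_2]\big)$; (ii) $\mathrm{tr}(t_1t_2t_3)[t_1,t_2]=\frac14\big(\mathrm{tr}(t_1t_3)\mathrm{tr}(t_2^2)-\mathrm{tr}(t_1t_2)\mathrm{tr}(t_2t_3)\big)t_1+\frac14\big(\mathrm{tr}(t_1^2)\mathrm{tr}(t_2t_3)-\mathrm{tr}(t_1t_2)\mathrm{tr}(t_1t_3)\big)t_2+\frac14\big(\mathrm{tr}(t_1t_2)^2-\mathrm{tr}(t_1^2)\mathrm{tr}(t_2^2)\big)t_3$; (iii) $\mathrm{tr}(t_1t_2t_3)f_{11}=\frac14\mathrm{tr}(t_1t_3)f_{112}-\frac14\mathrm{tr}(t_1t_2)f_{113}-\frac1{12}\mathrm{tr}(t_1^2)f_{132}+\frac1{12}\mathrm{tr}(t_1^2)f_{123}$; (iv) $\mathrm{tr}(t_1t_2t_3)f_{112}=\frac12\big(\mathrm{tr}(t_1t_3)\mathrm{tr}(t_2^2)-\mathrm{tr}(t_1t_2)\mathrm{tr}(t_2t_3)\big)f_{11}+\f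rac12\big(\mathrm{tr}(t_1^2)\mathrm{tr}(t_2t_3)-\mathrm{tr}(t_1t_2)\mathrm{tr}(t_1t_3)\big)f_{12}+\frac12\big(\mathrm{tr}(t_1t_2)^2-\mathrm{tr}(t_1^2)\mathrm{tr}(t_2^2)\big)f_{13}$.
   Context: $K$ is a field of characteristic $0$. $T_3=\{t^{(k)}_{ij}\mid1\le i<j\le3,\ k=1,2,3\}$ are commuting indeterminates and $t_k\in M_3(K[T_3])$ is the generic skew-symmetric matrix with zero diagonal, $(i,j)$ entry $t^{(k)}_{ij}$ and $(j,i)$ entry $-t^{(k)}_{ij}$ for $i<j$. $I$ is the $3\times3$ identity matrix and $[a,b]=ab-ba$; scalars $\mathrm{tr}(\cdot)\in K[T_3]$ multiply matrices entrywise. *)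

theory Defs
  imports "HOL-Analysis.Determinants" "HOL-Library.Poly_Mapping" "HOL-Library.Numeral_Type"
begin

text \<open>K[T_3] is rendered as the polynomial ring (Poly_Mapping: monomials = finitely
supported exponent maps) over K in the indeterminates t^(k)_(i,j), indexed by triples
(k,i,j) :: nat * 3 * 3; only the indeterminates with k in {1,2,3} and i < j are used.
The index type 3 has elements 0 < 1 < 2 standing for rows/columns 1,2,3.\<close>

type_synonym 'k pol = "((nat \<times> 3 \<times> 3) \<Rightarrow>\<^sub>0 nat) \<Rightarrow>\<^sub>0 'k"

definition Var :: "nat \<Rightarrow> 3 \<Rightarrow> 3 \<Rightarrow> 'k::comm_ring_1 pol" where
  "Var k i j = Poly_Mapping.single (Poly_Mapping.single (k, i, j) 1) 1"

definition Const :: "'k::comm_ring_1 \<Rightarrow> 'k pol" where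
  "Const c = Poly_Mapping.single 0 c"

definition gen_skew :: "nat \<Rightarrow> ('k::comm_ring_1 pol)^3^3" where
  "gen_skew k = (\<chi> i j. if i < j then Var k i j else if j < i then - Var k j i else 0)"

definition msc :: "'a::times \<Rightarrow> 'a^'n^'m \<Rightarrow> 'a^'n^'m" (infixl \<open>*m\<close> 70) where
  "c *m A = (\<chi> i j. c * A $ i $ j)"

definition mcomm :: "'a::ring_1^'n^'n \<Rightarrow> 'a^'n^'n \<Rightarrow> 'a^'n^'n" where
  "mcomm A B = A ** B - B ** A"

definition fsym :: "nat \<Rightarrow> nat \<Rightarrow> ('k::field_char_0 pol)^3^3" where
  "fsym i j = Const (1/2) *m (gen_skew i ** gen_skew j + gen_skew j ** gen_skew i)
      - (Const (1/3) * trace (gen_skew i ** gen_skew j)) *m mat 1"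

definition fsq :: "nat \<Rightarrow> nat \<Rightarrow> ('k::field_char_0 pol)^3^3" where
  "fsq i j = mcomm (gen_skew i ** gen_skew i) (gen_skew j)"

definition fanti :: "nat \<Rightarrow> nat \<Rightarrow> nat \<Rightarrow> ('k::field_char_0 pol)^3^3" where
  "fanti i j k = mcomm (gen_skew i ** gen_skew j + gen_skew j ** gen_skew i) (gen_skew k)"

end

theory Submission imports Defs "HOL-Library.Product_Lexorder" begin
lemma ord3: "(3::3) < 1" "(1::3) < 2" "(3::3) < 2" "\<not> (1::3) < 3" "\<not> (2::3) < 1" "\<not> (2::3) < 3" "\<not> (1::3) < 1"  "\<not> (2::3) < 2"  "\<not> (3::3) < 3"
  by (simp_all add: less_bit1_def bit1.Rep_numeral bit1.Rep_1)
lemma UNIV3: "(UNIV::3 set) = {1,2,3}" using exhaust_3 by auto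
lemma sum3: "sum f (UNIV::3 set) = f 1 + f 2 + f 3" unfolding UNIV3 by (simp add: ac_simps)
lemma ent: "gen_skew k $ 1 $ 1 = 0" "gen_skew k $ 2 $ 2 = 0" "gen_skew k $ 3 $ 3 = 0"
  "gen_skew k $ 3 $ 1 = Var k 3 1" "gen_skew k $ 1 $ 3 = - Var k 3 1"
  "gen_skew k $ 3 $ 2 = Var k 3 2" "gen_skew k $ 2 $ 3 = - Var k 3 2"
  "gen_skew k $ 1 $ 2 = Var k 1 2" "gen_skew k $ 2 $ 1 = - Var k 1 2"
  by (simp_all add: gen_skew_def ord3)
lemma Cmul: "Const a * Const b = Const (a * b)" by (simp add: Const_def mult_single)
lemma C1: "Const 1 = 1" by (simp add: Const_def)
lemma Cinv: "(2::'k::field_char_0 pol) * Const (1/2) = 1" "(4::'k pol) * Const (1/4) = 1"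
   "(12::'k pol) * Const (1/12) = 1" "(3::'k pol) * Const (1/3) = 1"
proof -
  have "(numeral n::'k pol) * Const (1 / numeral n) = 1" for n
  proof -
    have "(numeral n::'k pol) = Const (numeral n)" by (simp add: Const_def)
    then have "(numeral n::'k pol) * Const (1 / numeral n) = Const (numeral n * (1 / numeral n))"
      by (metis Cmul)
    also have "\<dots> = 1" by (simp add: C1)
    finally show ?thesis .
  qed
  then show "(2::'k::field_char_0 pol) * Const (1/2) = 1" "(4::'k pol) * Const (1/4) = 1"
   "(12::'k pol) * Const (1/12) = 1" "(3::'k pol) * Const (1/3) = 1" by blast+
qed
lemma neq3: "((1::3) = 2) = False" "((1::3) = 3) = False" "((2::3) = 1) = False" "((2::3) = 3) = False"
  "((3::3) = 1) = False" "((3::3) = 2) = False" "((1::3) = 1) = True" "((2::3) = 2) = True" "((3::3) = 3) = True"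
  by simp_all

lemma part1:
  fixes t1 t2 t3 :: "('k::field_char_0 pol)^3^3"
    and f11 f12 f13 f112 f113 f132 f123 :: "('k::field_char_0 pol)^3^3"
  defines "t1 \<equiv> gen_skew 1" and "t2 \<equiv> gen_skew 2" and "t3 \<equiv> gen_skew 3"
    and "f11 \<equiv> fsym 1 1" and "f12 \<equiv> fsym 1 2" and "f13 \<equiv> fsym 1 3"
    and "f112 \<equiv> fsq 1 2" and "f113 \<equiv> fsq 1 3"
    and "f132 \<equiv> fanti 1 3 2" and "f123 \<equiv> fanti 1 2 3"
  shows
  "(trace (t1 ** t2 ** t3) *m t1 =
     Const (1/2) *m (trace (t1 ** t1) *m mcomm t2 t3 - trace (t1 ** t2) *m mcomm t1 t3
                     + trace (t1 ** t3) *m mcomm t1 t2))"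
  unfolding assms vec_eq_iff forall_3
  apply (simp only: fsym_def fsq_def fanti_def matrix_matrix_mult_def trace_def msc_def mcomm_def
     vector_add_component vector_minus_component vec_lambda_beta sum3 ent mat_def neq3 if_True if_False)
  apply (simp only: mult_zero_left mult_zero_right add_0_left add_0_right mult_1_right mult_1_left diff_0_right)
  apply (intro conjI)
  apply ((algebra | simp add: algebra_simps; fail | (insert Cinv(1)[where 'k='k] Cinv(2)[where 'k='k] Cinv(3)[where 'k='k] Cinv(4)[where 'k='k], algebra))+)
  done

lemma part2:
  fixes t1 t2 t3 :: "('k::field_char_0 pol)^3^3"
    and f11 f12 f13 f112 f113 f132 f123 :: "('k::field_char_0 pol)^3^3"
  defines "t1 \<equiv> gen_skew 1" and "t2 \<equiv> gen_skew 2" and "t3 \<equiv> gen_skew 3"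
    and "f11 \<equiv> fsym 1 1" and "f12 \<equiv> fsym 1 2" and "f13 \<equiv> fsym 1 3"
    and "f112 \<equiv> fsq 1 2" and "f113 \<equiv> fsq 1 3"
    and "f132 \<equiv> fanti 1 3 2" and "f123 \<equiv> fanti 1 2 3"
  shows
  "(trace (t1 ** t2 ** t3) *m mcomm t1 t2 =
     (Const (1/4) * (trace (t1 ** t3) * trace (t2 ** t2) - trace (t1 ** t2) * trace (t2 ** t3))) *m t1
   + (Const (1/4) * (trace (t1 ** t1) * trace (t2 ** t3) - trace (t1 ** t2) * trace (t1 ** t3))) *m t2
   + (Const (1/4) * (trace (t1 ** t2) ^ 2 - trace (t1 ** t1) * trace (t2 ** t2))) *m t3)"
  unfolding assms vec_eq_iff forall_3
  apply (simp only: fsym_def fsq_def fanti_def matrix_matrix_mult_def trace_def msc_def mcomm_def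
     vector_add_component vector_minus_component vec_lambda_beta sum3 ent mat_def neq3 if_True if_False)
  apply (simp only: mult_zero_left mult_zero_right add_0_left add_0_right mult_1_right mult_1_left diff_0_right)
  apply (intro conjI)
  apply ((algebra | simp add: algebra_simps; fail | (insert Cinv(1)[where 'k='k] Cinv(2)[where 'k='k] Cinv(3)[where 'k='k] Cinv(4)[where 'k='k], algebra))+)
  done

lemma part3:
  fixes t1 t2 t3 :: "('k::field_char_0 pol)^3^3"
    and f11 f12 f13 f112 f113 f132 f123 :: "('k::field_char_0 pol)^3^3"
  defines "t1 \<equiv> gen_skew 1" and "t2 \<equiv> gen_skew 2" and "t3 \<equiv> gen_skew 3"
    and "f11 \<equiv> fsym 1 1" and "f12 \<equiv> fsym 1 2" and "f13 \<equiv> fsym 1 3"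
    and "f112 \<equiv> fsq 1 2" and "f113 \<equiv> fsq 1 3"
    and "f132 \<equiv> fanti 1 3 2" and "f123 \<equiv> fanti 1 2 3"
  shows
  "(trace (t1 ** t2 ** t3) *m f11 =
     (Const (1/4) * trace (t1 ** t3)) *m f112 - (Const (1/4) * trace (t1 ** t2)) *m f113
   - (Const (1/12) * trace (t1 ** t1)) *m f132 + (Const (1/12) * trace (t1 ** t1)) *m f123)"
  unfolding assms vec_eq_iff forall_3
  apply (simp only: fsym_def fsq_def fanti_def matrix_matrix_mult_def trace_def msc_def mcomm_def
     vector_add_component vector_minus_component vec_lambda_beta sum3 ent mat_def neq3 if_True if_False)
  apply (simp only: mult_zero_left mult_zero_right add_0_left add_0_right mult_1_right mult_1_left diff_0_right)
  apply (intro conjI)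
  apply ((algebra | simp add: algebra_simps; fail | (insert Cinv(1)[where 'k='k] Cinv(2)[where 'k='k] Cinv(3)[where 'k='k] Cinv(4)[where 'k='k], algebra))+)
  done

lemma part4:
  fixes t1 t2 t3 :: "('k::field_char_0 pol)^3^3"
    and f11 f12 f13 f112 f113 f132 f123 :: "('k::field_char_0 pol)^3^3"
  defines "t1 \<equiv> gen_skew 1" and "t2 \<equiv> gen_skew 2" and "t3 \<equiv> gen_skew 3"
    and "f11 \<equiv> fsym 1 1" and "f12 \<equiv> fsym 1 2" and "f13 \<equiv> fsym 1 3"
    and "f112 \<equiv> fsq 1 2" and "f113 \<equiv> fsq 1 3"
    and "f132 \<equiv> fanti 1 3 2" and "f123 \<equiv> fanti 1 2 3"
  shows
  "(trace (t1 ** t2 ** t3) *m f112 =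
     (Const (1/2) * (trace (t1 ** t3) * trace (t2 ** t2) - trace (t1 ** t2) * trace (t2 ** t3))) *m f11
   + (Const (1/2) * (trace (t1 ** t1) * trace (t2 ** t3) - trace (t1 ** t2) * trace (t1 ** t3))) *m f12
   + (Const (1/2) * (trace (t1 ** t2) ^ 2 - trace (t1 ** t1) * trace (t2 ** t2))) *m f13)"
  unfolding assms vec_eq_iff forall_3
  apply (simp only: fsym_def fsq_def fanti_def matrix_matrix_mult_def trace_def msc_def mcomm_def
     vector_add_component vector_minus_component vec_lambda_beta sum3 ent mat_def neq3 if_True if_False)
  apply (simp only: mult_zero_left mult_zero_right add_0_left add_0_right mult_1_right mult_1_left diff_0_right)
  apply (intro conjI)
  apply ((algebra | simp add: algebra_simps; fail | (insert Cinv(1)[where 'k='k] Cinv(2)[where 'k='k] Cinv(3)[where 'k='k] Cinv(4)[where 'k='k], algebra))+)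
  done

theorem proposition5p7:
  fixes t1 t2 t3 :: "('k::field_char_0 pol)^3^3"
    and f11 f12 f13 f112 f113 f132 f123 :: "('k::field_char_0 pol)^3^3"
  defines "t1 \<equiv> gen_skew 1" and "t2 \<equiv> gen_skew 2" and "t3 \<equiv> gen_skew 3"
    and "f11 \<equiv> fsym 1 1" and "f12 \<equiv> fsym 1 2" and "f13 \<equiv> fsym 1 3"
    and "f112 \<equiv> fsq 1 2" and "f113 \<equiv> fsq 1 3"
    and "f132 \<equiv> fanti 1 3 2" and "f123 \<equiv> fanti 1 2 3"
  shows
  "(trace (t1 ** t2 ** t3) *m t1 =
     Const (1/2) *m (trace (t1 ** t1) *m mcomm t2 t3 - trace (t1 ** t2) *m mcomm t1 t3
                     + trace (t1 ** t3) *m mcomm t1 t2))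
  \<and> (trace (t1 ** t2 ** t3) *m mcomm t1 t2 =
     (Const (1/4) * (trace (t1 ** t3) * trace (t2 ** t2) - trace (t1 ** t2) * trace (t2 ** t3))) *m t1
   + (Const (1/4) * (trace (t1 ** t1) * trace (t2 ** t3) - trace (t1 ** t2) * trace (t1 ** t3))) *m t2
   + (Const (1/4) * (trace (t1 ** t2) ^ 2 - trace (t1 ** t1) * trace (t2 ** t2))) *m t3)
  \<and> (trace (t1 ** t2 ** t3) *m f11 =
     (Const (1/4) * trace (t1 ** t3)) *m f112 - (Const (1/4) * trace (t1 ** t2)) *m f113
   - (Const (1/12) * trace (t1 ** t1)) *m f132 + (Const (1/12) * trace (t1 ** t1)) *m f123)
  \<and> (trace (t1 ** t2 ** t3) *m f112 =
     (Const (1/2) * (trace (t1 ** t3) * trace (t2 ** t2) - trace (t1 ** t2) * trace (t2 ** t3))) *m f11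
   + (Const (1/2) * (trace (t1 ** t1) * trace (t2 ** t3) - trace (t1 ** t2) * trace (t1 ** t3))) *m f12
   + (Const (1/2) * (trace (t1 ** t2) ^ 2 - trace (t1 ** t1) * trace (t2 ** t2))) *m f13)"
  unfolding assms using part1 part2 part3 part4 by blast

end
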